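(* Let $\varphi_{tm}$ be the morphism on finite sequences of numbers in $[0,1]$ defined by $\varphi_{tm}(x)=\left(\tfrac{x}{2}+\tfrac14,\ \tfrac{x}{2}+\tfrac34\right)$ if $0\le x\le \tfrac12$ and $\varphi_{tm}(x)=\left(\tfrac{x}{2}+\tfrac14,\ \tfrac{x}{2}-\tfrac14\right)$ if $\tfrac12<x\le 1$, extended by concatenation. Let $a_{tm}=\tfrac12,1,\tfrac34,\tfrac14,\tfrac58,\tfrac18,\tfrac38,\tfrac78,\ldots$ be its fixed point starting with $\tfrac12$. Then $a_{tm}$ is a canonical sequence and it is a representative of the valid permutation $\alpha_{u_{tm}}$ of the Thue–Morse word $u_{tm}=0110100110010110\cdots$ (the fixed point starting with $0$ of $0\mapsto 01,\ 1\mapsto 10$). In particular, the Thue–Morse permutation is ergodic and $a_{tm}$ is its canonical representative.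
   Context: For an aperiodic infinite word $u$ over $\{0,\ldots,q-1\}$, $\alpha_u$ is the infinite permutation with $\alpha_u[i]<\alpha_u[j]$ iff the shift $T^iu=u[i]u[i+1]\cdots$ is lexicographically smaller than $T^ju$. An infinite permutation is an equivalence class of real sequences with pairwise distinct elements, two sequences $(a[n]),(b[n])$ being equivalent iff $a[i]<a[j]\Leftrightarrow b[i]<b[j]$ for all $i,j$. A real sequence $(a[i])_{i\ge0}$ is canonical if its elements are pairwise distinct, lie in $[0,1]$, and for every $t\in[0,1]$, $\#\{0\le k<n: a[j+k]<t\}/n\to t$ as $n\to\infty$ uniformly in $j$; a permutation is ergodic if it has a canonical representative. *)

theory Defs
  imports Complex_Main
begin

definition tm_morph :: "nat \<Rightarrow> nat list" where
  "tm_morph x = (if x = 0 then [0, 1] else [1, 0])"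

text \<open>Its fixed point starting with 0: letter n is letter (n mod 2) of the image
  of letter (n div 2).\<close>
function u_tm :: "nat \<Rightarrow> nat" where
  "u_tm n = (if n = 0 then 0 else tm_morph (u_tm (n div 2)) ! (n mod 2))"
  by auto
termination by (relation "measure id") auto

definition phi_tm :: "real \<Rightarrow> real list" where
  "phi_tm x = (if x \<le> 1/2 then [x/2 + 1/4, x/2 + 3/4] else [x/2 + 1/4, x/2 - 1/4])"

definition phi_tm_list :: "real list \<Rightarrow> real list" where
  "phi_tm_list xs = concat (map phi_tm xs)"

text \<open>Its fixed point starting with 1/2.\<close>
function a_tm :: "nat \<Rightarrow> real" where
  "a_tm n = (if n = 0 then 1/2 else phi_tm (a_tm (n div 2)) ! (n mod 2))"
  by auto
termination by (relation "measure id") auto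

definition shift :: "nat \<Rightarrow> (nat \<Rightarrow> 'a) \<Rightarrow> (nat \<Rightarrow> 'a)" where
  "shift i u = (\<lambda>n. u (i + n))"

definition lex_less :: "(nat \<Rightarrow> nat) \<Rightarrow> (nat \<Rightarrow> nat) \<Rightarrow> bool" where
  "lex_less u v \<longleftrightarrow> (\<exists>k. (\<forall>i<k. u i = v i) \<and> u k < v k)"

text \<open>The infinite permutation alpha_u, as the equivalence class of real sequences
  with pairwise distinct elements ordered like the shifts of u.\<close>
definition alpha_perm :: "(nat \<Rightarrow> nat) \<Rightarrow> (nat \<Rightarrow> real) set" where
  "alpha_perm u = {b. inj b \<and> (\<forall>i j. b i < b j \<longleftrightarrow> lex_less (shift i u) (shift j u))}"

definition canonical :: "(nat \<Rightarrow> real) \<Rightarrow> bool" where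
  "canonical a \<longleftrightarrow> inj a \<and> (\<forall>i. 0 \<le> a i \<and> a i \<le> 1) \<and>
     (\<forall>t. 0 \<le> t \<and> t \<le> 1 \<longrightarrow>
        (\<forall>\<epsilon>>0. \<exists>N. \<forall>n\<ge>N. \<forall>j.
           \<bar>real (card {k. k < n \<and> a (j + k) < t}) / real n - t\<bar> < \<epsilon>))"

definition ergodic :: "(nat \<Rightarrow> real) set \<Rightarrow> bool" where
  "ergodic P \<longleftrightarrow> (\<exists>b\<in>P. canonical b)"

end

theory Submission
  imports Defs
begin

declare a_tm.simps[simp del] u_tm.simps[simp del]

lemma a0: "a_tm 0 = 1/2"
  by (subst a_tm.simps) simp

lemma a_even: "a_tm (2*n) = a_tm n / 2 + 1/4"
proof (cases "n = 0")
  case True thus ?thesis by (simp add: a0)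
next
  case False thus ?thesis by (subst a_tm.simps) (simp add: phi_tm_def)
qed

lemma a_odd: "a_tm (Suc (2*n)) = (if a_tm n \<le> 1/2 then a_tm n / 2 + 3/4 else a_tm n / 2 - 1/4)"
  by (subst a_tm.simps) (simp add: phi_tm_def)

lemma u0: "u_tm 0 = 0"
  by (subst u_tm.simps) simp

lemma u_even0: "u_tm (2*n) = (if u_tm n = 0 then 0 else 1)"
proof (cases "n = 0")
  case True thus ?thesis by (simp add: u0)
next
  case False thus ?thesis by (subst u_tm.simps) (simp add: tm_morph_def)
qed

lemma u_odd0: "u_tm (Suc (2*n)) = (if u_tm n = 0 then 1 else 0)"
  by (subst u_tm.simps) (simp add: tm_morph_def)

lemma parity_induct:
  assumes "P 0" "\<And>p. (\<And>q. q \<le> p \<Longrightarrow> P q) \<Longrightarrow> P (2*p) \<and> P (2*p+1)"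
  shows "P (n::nat)"
proof (induction n rule: less_induct)
  case (less n)
  show ?case
  proof (cases "n = 0")
    case True thus ?thesis using assms(1) by simp
  next
    case False
    have h: "\<And>q. q \<le> n div 2 \<Longrightarrow> P q" using less False by simp
    have "n = 2*(n div 2) \<or> n = 2*(n div 2)+1" by presburger
    thus ?thesis using assms(2)[OF h] by metis
  qed
qed

lemma u_le1: "u_tm n \<le> 1"
  by (induction n rule: parity_induct) (auto simp: u0 u_even0 u_odd0)

lemma u_even: "u_tm (2*n) = u_tm n"
  using u_le1[of n] by (auto simp: u_even0)

lemma u_odd: "u_tm (Suc (2*n)) = 1 - u_tm n"
  using u_le1[of n] by (auto simp: u_odd0)

lemma a_bounds: "0 < a_tm n \<and> a_tm n \<le> 1"
proof (induction n rule: parity_induct)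
  case 1 thus ?case by (simp add: a0)
next
  case (2 p)
  have "0 < a_tm p" "a_tm p \<le> 1" using 2[of p] by auto
  thus ?case by (simp add: a_even a_odd)
qed

lemma a_half: "a_tm n \<le> 1/2 \<longleftrightarrow> u_tm n = 0"
proof (induction n rule: parity_induct)
  case 1 thus ?case by (simp add: a0 u0)
next
  case (2 p)
  have "a_tm p \<le> 1/2 \<longleftrightarrow> u_tm p = 0" using 2 by simp
  thus ?case using a_bounds[of p] u_le1[of p] by (auto simp: a_even a_odd u_even u_odd)
qed

lemma nat_parity_cases:
  obtains p where "(n::nat) = 2*p" | p where "n = Suc (2*p)"
  by (metis Suc_eq_plus1 oddE evenE)

lemma a_inj_aux: "a_tm i = a_tm j \<Longrightarrow> i = j"
proof (induction "i+j" arbitrary: i j rule: less_induct)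
  case less
  show ?case
  proof (cases i rule: nat_parity_cases)
    case (1 p)
    show ?thesis
    proof (cases j rule: nat_parity_cases)
      case (1 q)
      show ?thesis
      proof (cases "p + q = 0")
        case True thus ?thesis using \<open>i = 2*p\<close> 1 by simp
      next
        case False
        have "a_tm p = a_tm q" using less.prems \<open>i = 2*p\<close> 1 by (simp add: a_even)
        moreover have "p + q < i + j" using False \<open>i = 2*p\<close> 1 by linarith
        ultimately show ?thesis using less.hyps \<open>i = 2*p\<close> 1 by simp
      qed
    next
      case (2 q)
      have "0 < a_tm p" "a_tm p \<le> 1" "0 < a_tm q" "a_tm q \<le> 1" using a_bounds by auto
      thus ?thesis using less.prems \<open>i = 2*p\<close> 2 by (auto simp: a_even a_odd split: if_splits)
    qed
  next
    case (2 p)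
    show ?thesis
    proof (cases j rule: nat_parity_cases)
      case (1 q)
      have "0 < a_tm p" "a_tm p \<le> 1" "0 < a_tm q" "a_tm q \<le> 1" using a_bounds by auto
      thus ?thesis using less.prems \<open>i = Suc (2*p)\<close> 1 by (auto simp: a_even a_odd split: if_splits)
    next
      case (2 q)
      have b: "0 < a_tm p" "a_tm p \<le> 1" "0 < a_tm q" "a_tm q \<le> 1" using a_bounds by auto
      have "a_tm p = a_tm q" using less.prems \<open>i = Suc (2*p)\<close> 2 b by (auto simp: a_odd split: if_splits)
      moreover have "p + q < i + j" using \<open>i = Suc (2*p)\<close> 2 by simp
      ultimately show ?thesis using less.hyps \<open>i = Suc (2*p)\<close> 2 by simp
    qed
  qed
qed

lemma a_inj: "inj a_tm"
  using a_inj_aux by (auto simp: inj_def)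

abbreviation L :: "nat \<Rightarrow> nat \<Rightarrow> bool" where
  "L i j \<equiv> lex_less (shift i u_tm) (shift j u_tm)"

lemma L_def': "L i j \<longleftrightarrow> (\<exists>k. (\<forall>l<k. u_tm (i+l) = u_tm (j+l)) \<and> u_tm (i+k) < u_tm (j+k))"
  by (simp add: lex_less_def shift_def)

lemma L_irrefl: "\<not> L i i"
  by (simp add: L_def')

lemma L_asym: "L i j \<Longrightarrow> \<not> L j i"
  unfolding L_def' by (metis less_asym linorder_neqE_nat)

lemma L_first: "u_tm i < u_tm j \<Longrightarrow> L i j"
  unfolding L_def' by (rule exI[of _ 0]) simp

lemma L_step: "u_tm i = u_tm j \<Longrightarrow> L i j \<longleftrightarrow> L (Suc i) (Suc j)"
proof
  assume e: "u_tm i = u_tm j" and "L i j"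
  then obtain k where k: "\<forall>l<k. u_tm (i+l) = u_tm (j+l)" "u_tm (i+k) < u_tm (j+k)"
    unfolding L_def' by blast
  with e have "k \<noteq> 0" by (metis add_0_right less_irrefl)
  then obtain k' where "k = Suc k'" by (metis not0_implies_Suc)
  thus "L (Suc i) (Suc j)" unfolding L_def' using k
    by (intro exI[of _ k']) auto
next
  assume e: "u_tm i = u_tm j" and "L (Suc i) (Suc j)"
  then obtain k where k: "\<forall>l<k. u_tm (Suc i+l) = u_tm (Suc j+l)" "u_tm (Suc i+k) < u_tm (Suc j+k)"
    unfolding L_def' by blast
  show "L i j" unfolding L_def'
  proof (intro exI[of _ "Suc k"] conjI allI impI)
    fix l assume "l < Suc k"
    thus "u_tm (i+l) = u_tm (j+l)" using k e by (cases l) auto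
  qed (use k in auto)
qed

lemma u_2: "u_tm (2*p + 2*l) = u_tm (p+l)" "u_tm (Suc (2*p + 2*l)) = 1 - u_tm (p+l)"
  using u_even[of "p+l"] u_odd[of "p+l"] by (simp_all add: algebra_simps)

lemma L_double: "L (2*p) (2*q) \<longleftrightarrow> L p q"
proof
  assume "L (2*p) (2*q)"
  then obtain k where k: "\<forall>l<k. u_tm (2*p+l) = u_tm (2*q+l)" "u_tm (2*p+k) < u_tm (2*q+k)"
    unfolding L_def' by blast
  show "L p q"
  proof (cases k rule: nat_parity_cases)
    case (1 k')
    show ?thesis unfolding L_def'
    proof (intro exI[of _ k'] conjI allI impI)
      fix l assume "l < k'"
      hence "u_tm (2*p+2*l) = u_tm (2*q+2*l)" using k 1 by auto
      thus "u_tm (p+l) = u_tm (q+l)" by (simp add: u_2)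
    next
      show "u_tm (p+k') < u_tm (q+k')" using k(2) 1 by (simp add: u_2)
    qed
  next
    case (2 k')
    have "u_tm (2*p+2*k') = u_tm (2*q+2*k')" using k 2 by auto
    hence "u_tm (p+k') = u_tm (q+k')" by (simp add: u_2)
    hence False using k(2) 2 u_2[of p k'] u_2[of q k'] by simp
    thus ?thesis ..
  qed
next
  assume "L p q"
  then obtain k where k: "\<forall>l<k. u_tm (p+l) = u_tm (q+l)" "u_tm (p+k) < u_tm (q+k)"
    unfolding L_def' by blast
  show "L (2*p) (2*q)" unfolding L_def'
  proof (intro exI[of _ "2*k"] conjI allI impI)
    fix l assume l: "l < 2*k"
    show "u_tm (2*p+l) = u_tm (2*q+l)"
    proof (cases l rule: nat_parity_cases)
      case (1 l') thus ?thesis using k l u_2[of p l'] u_2[of q l'] by auto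
    next
      case (2 l') thus ?thesis using k l u_2[of p l'] u_2[of q l'] by auto
    qed
  next
    show "u_tm (2*p+2*k) < u_tm (2*q+2*k)" using k(2) by (simp add: u_2)
  qed
qed

lemma u_nooverlap: "u_tm q = u_tm (Suc q) \<Longrightarrow> u_tm (Suc (Suc q)) = 1 - u_tm q"
proof (cases q rule: nat_parity_cases)
  case (1 s)
  assume "u_tm q = u_tm (Suc q)"
  hence "u_tm s = 1 - u_tm s" using 1 u_even[of s] u_odd[of s] by simp
  hence False using u_le1[of s] by arith
  thus ?thesis ..
next
  case (2 s)
  have a: "u_tm (Suc q) = u_tm (Suc s)" using 2 u_even[of "Suc s"] by simp
  have b: "u_tm (Suc (Suc q)) = 1 - u_tm (Suc s)" using 2 u_odd[of "Suc s"] by simp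
  assume "u_tm q = u_tm (Suc q)"
  thus ?thesis using a b by simp
qed

lemma u_facts:
  "u_tm (2*p) = u_tm p" "u_tm (Suc (2*p)) = 1 - u_tm p"
  "u_tm (Suc (Suc (2*p))) = u_tm (Suc p)" "u_tm (Suc (Suc (Suc (2*p)))) = 1 - u_tm (Suc p)"
  using u_even[of p] u_odd[of p] u_even[of "Suc p"] u_odd[of "Suc p"] by simp_all

lemma L_mixed0:
  assumes "u_tm q = 0" shows "L (2*p) (Suc (2*q))"
proof -
  have lp: "u_tm p \<le> 1" "u_tm (Suc p) \<le> 1" "u_tm (Suc q) \<le> 1" using u_le1 by auto
  have no: "u_tm q = u_tm (Suc q) \<Longrightarrow> u_tm (Suc (Suc q)) = 1 - u_tm q" by (rule u_nooverlap)
  have o4: "u_tm (Suc (Suc (Suc (Suc (2*q))))) = u_tm (Suc (Suc q))"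
    using u_even[of "Suc (Suc q)"] by simp
  show ?thesis unfolding L_def'
  proof (cases "u_tm p = 0")
    case True thus "\<exists>k. (\<forall>l<k. u_tm (2*p+l) = u_tm (Suc (2*q)+l)) \<and> u_tm (2*p+k) < u_tm (Suc (2*q)+k)"
      using assms by (intro exI[of _ 0]) (simp add: u_facts)
  next
    case pf: False
    show "\<exists>k. (\<forall>l<k. u_tm (2*p+l) = u_tm (Suc (2*q)+l)) \<and> u_tm (2*p+k) < u_tm (Suc (2*q)+k)"
    proof (cases "u_tm (Suc q) = 0")
      case False thus ?thesis
        using assms pf lp by (intro exI[of _ 1]) (simp add: u_facts)
    next
      case q1: True
      show ?thesis
      proof (cases "u_tm (Suc p) = 0")
        case True thus ?thesis
          using assms pf lp q1 by (intro exI[of _ "Suc (Suc 0)"]) (simp add: u_facts All_less_Suc)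
      next
        case False thus ?thesis
          using assms pf lp q1 no o4 by (intro exI[of _ "Suc (Suc (Suc 0))"]) (simp add: u_facts All_less_Suc)
      qed
    qed
  qed
qed

lemma L_mixed1:
  assumes "u_tm q = 1" shows "L (Suc (2*q)) (2*p)"
proof -
  have lp: "u_tm p \<le> 1" "u_tm (Suc p) \<le> 1" "u_tm (Suc q) \<le> 1" "u_tm (Suc (Suc q)) \<le> 1" using u_le1 by auto
  have no: "u_tm q = u_tm (Suc q) \<Longrightarrow> u_tm (Suc (Suc q)) = 1 - u_tm q" by (rule u_nooverlap)
  have o4: "u_tm (Suc (Suc (Suc (Suc (2*q))))) = u_tm (Suc (Suc q))"
    using u_even[of "Suc (Suc q)"] by simp
  show ?thesis unfolding L_def'
  proof (cases "u_tm p = 0")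
    case False thus "\<exists>k. (\<forall>l<k. u_tm (Suc (2*q)+l) = u_tm (2*p+l)) \<and> u_tm (Suc (2*q)+k) < u_tm (2*p+k)"
      using assms by (intro exI[of _ 0]) (simp add: u_facts)
  next
    case pf: True
    show "\<exists>k. (\<forall>l<k. u_tm (Suc (2*q)+l) = u_tm (2*p+l)) \<and> u_tm (Suc (2*q)+k) < u_tm (2*p+k)"
    proof (cases "u_tm (Suc q) = 0")
      case True thus ?thesis
        using assms pf lp by (intro exI[of _ 1]) (simp add: u_facts)
    next
      case q1: False
      show ?thesis
      proof (cases "u_tm (Suc p) = 0")
        case False thus ?thesis
          using assms pf lp q1 by (intro exI[of _ "Suc (Suc 0)"]) (simp add: u_facts All_less_Suc)
      next
        case True thus ?thesis
          using assms pf lp q1 no o4 by (intro exI[of _ "Suc (Suc (Suc 0))"]) (simp add: u_facts All_less_Suc)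
      qed
    qed
  qed
qed

lemma order_main: "a_tm i < a_tm j \<longleftrightarrow> L i j"
proof (induction "i+j" arbitrary: i j rule: less_induct)
  case less
  show ?case
  proof (cases i rule: nat_parity_cases)
    case (1 p)
    show ?thesis
    proof (cases j rule: nat_parity_cases)
      case (1 q)
      show ?thesis
      proof (cases "p = q")
        case True thus ?thesis using \<open>i = 2*p\<close> 1 L_irrefl by simp
      next
        case False
        have "p + q < i + j" using False \<open>i = 2*p\<close> 1 by linarith
        hence "a_tm p < a_tm q \<longleftrightarrow> L p q" using less.hyps by simp
        thus ?thesis using \<open>i = 2*p\<close> 1 by (simp add: a_even L_double)
      qed
    next
      case (2 q)
      have "0 < a_tm p" "a_tm p \<le> 1" "0 < a_tm q" "a_tm q \<le> 1" using a_bounds by auto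
      moreover have "a_tm q \<le> 1/2 \<longleftrightarrow> u_tm q = 0" by (rule a_half)
      moreover have "u_tm q = 0 \<or> u_tm q = 1" using u_le1[of q] by auto
      ultimately show ?thesis using \<open>i = 2*p\<close> 2 L_mixed0[of q p] L_mixed1[of q p] L_asym
        by (auto simp: a_even a_odd)
    qed
  next
    case (2 p)
    show ?thesis
    proof (cases j rule: nat_parity_cases)
      case (1 q)
      have "0 < a_tm p" "a_tm p \<le> 1" "0 < a_tm q" "a_tm q \<le> 1" using a_bounds by auto
      moreover have "a_tm p \<le> 1/2 \<longleftrightarrow> u_tm p = 0" by (rule a_half)
      moreover have "u_tm p = 0 \<or> u_tm p = 1" using u_le1[of p] by auto
      ultimately show ?thesis using \<open>i = Suc (2*p)\<close> 1 L_mixed0[of p q] L_mixed1[of p q] L_asym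
        by (auto simp: a_even a_odd)
    next
      case (2 q)
      have b: "0 < a_tm p" "a_tm p \<le> 1" "0 < a_tm q" "a_tm q \<le> 1" using a_bounds by auto
      have hp: "a_tm p \<le> 1/2 \<longleftrightarrow> u_tm p = 0" "a_tm q \<le> 1/2 \<longleftrightarrow> u_tm q = 0" by (rule a_half)+
      have up: "u_tm p \<le> 1" "u_tm q \<le> 1" using u_le1 by auto
      show ?thesis
      proof (cases "u_tm p = u_tm q")
        case True
        show ?thesis
        proof (cases "p = q")
          case True thus ?thesis using \<open>i = Suc (2*p)\<close> 2 L_irrefl by simp
        next
          case False
          have "p + q < i + j" using \<open>i = Suc (2*p)\<close> 2 by simp
          hence "a_tm p < a_tm q \<longleftrightarrow> L p q" using less.hyps by simp
          also have "\<dots> \<longleftrightarrow> L (2*p) (2*q)" by (simp add: L_double)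
          also have "\<dots> \<longleftrightarrow> L (Suc (2*p)) (Suc (2*q))" using True by (intro L_step) (simp add: u_even)
          finally have e: "a_tm p < a_tm q \<longleftrightarrow> L i j" using \<open>i = Suc (2*p)\<close> 2 by simp
          have "a_tm i < a_tm j \<longleftrightarrow> a_tm p < a_tm q"
            using \<open>i = Suc (2*p)\<close> 2 True hp b by (auto simp: a_odd)
          thus ?thesis using e by simp
        qed
      next
        case False
        hence "(u_tm p = 0 \<and> u_tm q = 1) \<or> (u_tm p = 1 \<and> u_tm q = 0)" using up by auto
        thus ?thesis
        proof
          assume h: "u_tm p = 0 \<and> u_tm q = 1"
          hence "L j i" using \<open>i = Suc (2*p)\<close> 2 by (intro L_first) (simp add: u_odd)
          moreover have "\<not> a_tm i < a_tm j" using \<open>i = Suc (2*p)\<close> 2 h hp b by (auto simp: a_odd)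
          ultimately show ?thesis using L_asym by blast
        next
          assume h: "u_tm p = 1 \<and> u_tm q = 0"
          hence "L i j" using \<open>i = Suc (2*p)\<close> 2 by (intro L_first) (simp add: u_odd)
          moreover have "a_tm i < a_tm j" using \<open>i = Suc (2*p)\<close> 2 h hp b by (auto simp: a_odd)
          ultimately show ?thesis by blast
        qed
      qed
    qed
  qed
qed

lemma a_in_alpha: "a_tm \<in> alpha_perm u_tm"
  unfolding alpha_perm_def using a_inj order_main by blast

definition blk :: "nat \<Rightarrow> nat \<Rightarrow> bool" where
  "blk m r \<longleftrightarrow> (\<exists>c. 0 < c \<and> c \<le> 1/2^m \<and> (\<forall>s<2^m. \<exists>z::int. a_tm (2^m*r+s) = c + z/2^m))"

lemma blk_base: "blk (Suc 0) r"
proof -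
  define c where "c = (if a_tm r \<le> 1/2 then a_tm r/2+1/4 else a_tm r/2-1/4)"
  have b: "0 < a_tm r" "a_tm r \<le> 1" using a_bounds by auto
  have "0 < c" "c \<le> 1/2" using b by (auto simp: c_def)
  moreover have "\<exists>z::int. a_tm (2*r+s) = c + z/2" if "s < 2" for s
  proof -
    have "s = 0 \<or> s = 1" using that by auto
    thus ?thesis
    proof
      assume "s = 0"
      thus ?thesis
        by (cases "a_tm r \<le> 1/2") (auto simp: a_even c_def intro: exI[of _ 0] exI[of _ 1])
    next
      assume "s = 1"
      thus ?thesis
        by (cases "a_tm r \<le> 1/2") (auto simp: a_odd c_def intro: exI[of _ 0] exI[of _ 1])
    qed
  qed
  ultimately show ?thesis unfolding blk_def by auto
qed

lemma blk_all: "blk (Suc m) r"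
proof (induction m arbitrary: r)
  case 0 thus ?case by (rule blk_base)
next
  case (Suc m)
  obtain c where c: "0 < c" "c \<le> 1/2^Suc m" "\<forall>s<2^Suc m. \<exists>z::int. a_tm (2^Suc m*r+s) = c + z/2^Suc m"
    using Suc.IH[of r] unfolding blk_def by blast
  have "\<exists>z::int. a_tm (2^Suc (Suc m)*r+s) = c/2 + z/2^Suc (Suc m)" if s: "s < 2^Suc (Suc m)" for s
  proof -
    define n where "n = 2^Suc m * r + s div 2"
    have sd: "s div 2 < 2^Suc m" using s by simp
    obtain z :: int where z: "a_tm n = c + z/2^Suc m" using c(3) sd n_def by blast
    have idx: "2^Suc (Suc m)*r+s = 2*n + s mod 2" unfolding n_def by simp
    have P: "(2::real)^Suc (Suc m) = 4 * 2^m" "(2::real)^Suc m = 2 * 2^m" by simp_all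
    have Pi: "(2::int)^m = 2^m" by simp
    show ?thesis
    proof (cases "s mod 2 = 0")
      case True
      have "a_tm (2*n) = c/2 + (z + 2^m)/2^Suc (Suc m)"
        unfolding a_even z P by (simp add: field_simps)
      thus ?thesis unfolding idx True by (metis add_0_right of_int_add of_int_numeral of_int_power)
    next
      case False
      hence F: "s mod 2 = 1" by simp
      show ?thesis
      proof (cases "a_tm n \<le> 1/2")
        case True
        have "a_tm (Suc (2*n)) = c/2 + (z + 3*2^m)/2^Suc (Suc m)"
          unfolding a_odd using True unfolding z P by (simp add: field_simps)
        thus ?thesis unfolding idx F by (metis Suc_eq_plus1 of_int_add of_int_mult of_int_numeral of_int_power)
      next
        case False
        have "a_tm (Suc (2*n)) = c/2 + (z - 2^m)/2^Suc (Suc m)"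
          unfolding a_odd using False unfolding z P by (simp add: field_simps)
        thus ?thesis unfolding idx F by (metis Suc_eq_plus1 of_int_diff of_int_numeral of_int_power)
      qed
    qed
  qed
  moreover have "0 < c/2" "c/2 \<le> 1/2^Suc (Suc m)" using c by (auto simp: field_simps)
  ultimately show ?case unfolding blk_def by blast
qed

lemma ceil_count:
  fixes x :: real and B :: nat
  shows "card {z::int. 0 \<le> z \<and> z < int B \<and> of_int z < x} = nat (min (int B) \<lceil>x\<rceil>)"
proof -
  have "{z::int. 0 \<le> z \<and> z < int B \<and> of_int z < x} = {0..<min (int B) \<lceil>x\<rceil>}"
    by (auto simp: less_ceiling_iff)
  thus ?thesis by simp
qed

lemma blk_count:
  assumes "blk m r" "0 \<le> t" "t \<le> 1"
  shows "\<bar>real (card {k. k < 2^m \<and> a_tm (2^m*r + k) < t}) - 2^m * t\<bar> \<le> 1"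
proof -
  obtain c where c: "0 < c" "c \<le> 1/2^m" "\<forall>s<2^m. \<exists>z::int. a_tm (2^m*r+s) = c + z/2^m"
    using assms(1) unfolding blk_def by blast
  define Br :: real where "Br = 2^m"
  have Br: "Br > 0" "Br * c \<le> 1" "0 < Br * c" using c by (auto simp: Br_def field_simps)
  define f where "f s = \<lfloor>Br * (a_tm (2^m*r+s) - c)\<rfloor>" for s
  have fex: "Br * (a_tm (2^m*r+s) - c) = of_int (f s)" if sl: "s < 2^m" for s
  proof -
    obtain z :: int where z: "a_tm (2^m*r+s) = c + z/2^m" using c(3) sl by blast
    have "Br * (a_tm (2^m*r+s) - c) = z" unfolding z Br_def by simp
    thus ?thesis unfolding f_def by simp
  qed
  have frange: "0 \<le> f s \<and> f s < int (2^m)" if "s < 2^m" for s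
  proof -
    have ab: "0 < a_tm (2^m*r+s)" "a_tm (2^m*r+s) \<le> 1" using a_bounds by auto
    have "0 < Br * a_tm (2^m*r+s)" using ab Br by simp
    hence "-1 < Br * (a_tm (2^m*r+s) - c)" using Br(2) unfolding right_diff_distrib by linarith
    moreover have "Br * a_tm (2^m*r+s) \<le> Br" using ab Br by simp
    hence "Br * (a_tm (2^m*r+s) - c) < Br" using Br(3) unfolding right_diff_distrib by linarith
    ultimately have "-1 < real_of_int (f s)" "real_of_int (f s) < Br" using fex[OF that] by auto
    hence "-1 < f s" "real_of_int (f s) < 2^m" by (auto simp: Br_def)
    moreover have "real_of_int (f s) < 2^m \<Longrightarrow> f s < int (2^m)"
      by (metis of_int_less_iff of_int_numeral of_int_of_nat_eq of_int_power of_nat_numeral of_nat_power)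
    ultimately show ?thesis by auto
  qed
  have finj: "inj_on f {..<2^m}"
  proof (rule inj_onI)
    fix s s' assume "s \<in> {..<(2::nat)^m}" "s' \<in> {..<(2::nat)^m}" "f s = f s'"
    hence "Br * (a_tm (2^m*r+s) - c) = Br * (a_tm (2^m*r+s') - c)" using fex by auto
    hence "a_tm (2^m*r+s) = a_tm (2^m*r+s')" using Br by simp
    thus "s = s'" using a_inj by (auto dest: injD)
  qed
  have fimg: "f ` {..<2^m} = {0..<int (2^m)}"
  proof (rule card_subset_eq)
    show "f ` {..<2^m} \<subseteq> {0..<int (2^m)}" using frange by auto
    show "card (f ` {..<2^m}) = card {0..<int (2^m)}"
      using card_image[OF finj] by simp
  qed simp
  define A where "A = {k. k < 2^m \<and> a_tm (2^m*r + k) < t}"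
  define x where "x = Br * (t - c)"
  have "f ` A = {z::int. 0 \<le> z \<and> z < int (2^m) \<and> of_int z < x}"
  proof -
    have "a_tm (2^m*r + k) < t \<longleftrightarrow> of_int (f k) < x" if "k < 2^m" for k
    proof -
      have "of_int (f k) < x \<longleftrightarrow> Br * (a_tm (2^m*r + k) - c) < Br * (t - c)"
        using fex[OF that] unfolding x_def by simp
      also have "\<dots> \<longleftrightarrow> a_tm (2^m*r + k) - c < t - c" using Br(1) by (rule mult_less_cancel_left_pos)
      finally show ?thesis by simp
    qed
    hence "f ` A = {z \<in> f ` {..<2^m}. of_int z < x}" unfolding A_def by auto
    thus ?thesis unfolding fimg by auto
  qed
  moreover have "card (f ` A) = card A"
    by (rule card_image, rule inj_on_subset[OF finj]) (auto simp: A_def)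
  ultimately have cA: "card A = nat (min (int (2^m)) \<lceil>x\<rceil>)" using ceil_count[of "2^m" x] by simp
  have "Br * t \<le> Br" using Br(1) assms(3) by simp
  hence xlt: "x < Br" using Br(3) unfolding x_def right_diff_distrib by linarith
  have "\<lceil>x\<rceil> \<le> int (2^m)"
  proof -
    have "x \<le> real (2^m)" using xlt by (simp add: Br_def)
    thus ?thesis by (metis ceiling_le_iff of_int_of_nat_eq)
  qed
  hence cA': "card A = nat \<lceil>x\<rceil>" using cA by simp
  have Bt: "Br * t = x + Br * c" unfolding x_def by (simp add: algebra_simps)
  have "\<bar>real (nat \<lceil>x\<rceil>) - Br * t\<bar> \<le> 1"
  proof (cases "\<lceil>x\<rceil> \<le> 0")
    case True
    hence "x \<le> 0" by (meson ceiling_le_zero)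
    moreover have "0 \<le> Br * t" using Br assms(2) by simp
    ultimately show ?thesis using True Bt Br by simp
  next
    case False
    hence e: "real (nat \<lceil>x\<rceil>) = of_int \<lceil>x\<rceil>" by simp
    have l: "x \<le> of_int \<lceil>x\<rceil>" "of_int \<lceil>x\<rceil> < x + 1" using ceiling_correct[of x] by auto
    show ?thesis unfolding abs_le_iff e using l Bt Br by linarith
  qed
  thus ?thesis using cA' unfolding A_def Br_def by simp
qed

definition cnt :: "nat \<Rightarrow> nat \<Rightarrow> real \<Rightarrow> nat" where
  "cnt j n t = card {k. k < n \<and> a_tm (j + k) < t}"

lemma cnt_Suc: "cnt j (Suc n) t = cnt j n t + (if a_tm (j+n) < t then 1 else 0)"
proof -
  have fin: "finite {k. k < n \<and> a_tm (j + k) < t}" by simp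
  show ?thesis
  proof (cases "a_tm (j+n) < t")
    case True
    hence "{k. k < Suc n \<and> a_tm (j + k) < t} = insert n {k. k < n \<and> a_tm (j + k) < t}"
      by (auto simp: less_Suc_eq)
    thus ?thesis using True fin by (simp add: cnt_def)
  next
    case False
    hence "{k. k < Suc n \<and> a_tm (j + k) < t} = {k. k < n \<and> a_tm (j + k) < t}"
      by (auto simp: less_Suc_eq)
    thus ?thesis using False by (simp add: cnt_def)
  qed
qed

lemma cnt_add: "cnt j (n1+n2) t = cnt j n1 t + cnt (j+n1) n2 t"
proof (induction n2)
  case 0 thus ?case by (simp add: cnt_def)
next
  case (Suc n2) thus ?case by (simp add: cnt_Suc add.assoc)
qed

lemma cnt_le: "cnt j n t \<le> n"
proof -
  have "cnt j n t \<le> card {..<n}" unfolding cnt_def by (rule card_mono) auto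
  thus ?thesis by simp
qed

lemma cnt_triv: "0 \<le> t \<Longrightarrow> t \<le> 1 \<Longrightarrow> \<bar>real (cnt j n t) - n * t\<bar> \<le> n"
proof -
  assume t: "0 \<le> t" "t \<le> 1"
  have "real (cnt j n t) \<le> n" using cnt_le[of j n t] by simp
  moreover have "0 \<le> n * t" "n * t \<le> n" using t by (auto simp: mult_left_le)
  ultimately show ?thesis by (simp add: abs_le_iff)
qed

lemma cnt_aligned:
  assumes "0 \<le> t" "t \<le> 1"
  shows "\<bar>real (cnt (2^Suc m * r) (Lb * 2^Suc m) t) - real (Lb * 2^Suc m) * t\<bar> \<le> Lb"
proof (induction Lb arbitrary: r)
  case 0 thus ?case by (simp add: cnt_def)
next
  case (Suc Lb)
  have b: "\<bar>real (cnt (2^Suc m * r) (2^Suc m) t) - 2^Suc m * t\<bar> \<le> 1"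
    using blk_count[OF blk_all assms, of m r] by (simp add: cnt_def)
  have "2^Suc m * r + 2^Suc m = 2^Suc m * (Suc r)" by simp
  hence e: "cnt (2^Suc m * r) (Suc Lb * 2^Suc m) t = cnt (2^Suc m * r) (2^Suc m) t + cnt (2^Suc m * Suc r) (Lb * 2^Suc m) t"
    using cnt_add[of "2^Suc m * r" "2^Suc m" "Lb * 2^Suc m" t] by (simp add: add.commute)
  have ih: "\<bar>real (cnt (2^Suc m * Suc r) (Lb * 2^Suc m) t) - real (Lb * 2^Suc m) * t\<bar> \<le> Lb" by (rule Suc.IH)
  have "real (Suc Lb * 2^Suc m) * t = 2^Suc m * t + real (Lb * 2^Suc m) * t" by (simp add: algebra_simps)
  thus ?case unfolding e using b ih by (simp add: abs_le_iff)
qed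

lemma cnt_general:
  assumes t: "0 \<le> t" "t \<le> 1"
  shows "\<bar>real (cnt j n t) - n * t\<bar> \<le> 2 * 2^Suc m + n / 2^Suc m"
proof -
  define B :: nat where "B = 2^Suc m"
  have Bpos: "B > 0" by (simp add: B_def)
  define d where "d = B - j mod B"
  define r where "r = j div B + 1"
  have jd: "j + d = B * r"
  proof -
    have "j = B*(j div B) + j mod B" by simp
    moreover have "j mod B < B" using Bpos by simp
    ultimately have "j + d = B*(j div B) + B" unfolding d_def by linarith
    thus ?thesis unfolding r_def by simp
  qed
  have dB: "d \<le> B" by (simp add: d_def)
  have nonneg: "0 \<le> real n / real B" by simp
  show ?thesis
  proof (cases "n \<le> d")
    case True
    have "\<bar>real (cnt j n t) - n * t\<bar> \<le> n" by (rule cnt_triv[OF t])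
    also have "\<dots> \<le> B" using True dB by simp
    finally have h: "\<bar>real (cnt j n t) - n * t\<bar> \<le> real B" .
    have "real B = 2^Suc m" by (simp add: B_def)
    moreover have "0 \<le> real n / 2^Suc m" by simp
    ultimately show ?thesis using h by linarith
  next
    case False
    define Lb where "Lb = (n - d) div B"
    define e where "e = (n - d) mod B"
    have eB: "e < B" using Bpos by (simp add: e_def)
    have nsplit: "n = d + (Lb * B + e)" using False div_mult_mod_eq[of "n-d" B] by (simp add: Lb_def e_def)
    have c: "cnt j n t = cnt j d t + cnt (B * r) (Lb * B) t + cnt (B * r + Lb * B) e t"
      using cnt_add[of j d "Lb*B+e" t] cnt_add[of "B*r" "Lb*B" e t] nsplit jd by simp
    have e1: "\<bar>real (cnt j d t) - d * t\<bar> \<le> d" by (rule cnt_triv[OF t])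
    have e2: "\<bar>real (cnt (B * r) (Lb * B) t) - real (Lb * B) * t\<bar> \<le> Lb"
      unfolding B_def by (rule cnt_aligned[OF t])
    have e3: "\<bar>real (cnt (B * r + Lb * B) e t) - e * t\<bar> \<le> e" by (rule cnt_triv[OF t])
    have nt: "real n * t = d * t + real (Lb * B) * t + e * t" using nsplit by (simp add: algebra_simps)
    have "\<bar>real (cnt j n t) - n * t\<bar> \<le> d + Lb + e"
      unfolding c nt using e1 e2 e3 by (simp add: abs_le_iff) 
    moreover have "real Lb \<le> n / B"
    proof -
      have "real Lb * B \<le> n" using nsplit by (simp flip: of_nat_mult)
      thus ?thesis using Bpos by (simp add: field_simps)
    qed
    moreover have "real d \<le> real B" "real e \<le> real B" using dB eB by auto
    moreover have "real B = 2^Suc m" by (simp add: B_def)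
    ultimately show ?thesis by (simp only:)
  qed
qed

lemma a_canonical: "canonical a_tm"
  unfolding canonical_def
proof (intro conjI allI impI)
  show "inj a_tm" by (rule a_inj)
  fix i show "0 \<le> a_tm i" "a_tm i \<le> 1" using a_bounds[of i] by auto
next
  fix t :: real and \<epsilon> :: real
  assume t: "0 \<le> t \<and> t \<le> 1" and ep: "\<epsilon> > 0"
  obtain m where m: "2/\<epsilon> < 2^m" using real_arch_pow[of 2 "2/\<epsilon>"] by auto
  define B :: real where "B = 2^Suc m"
  have "(0::real) < 2^m" by simp
  moreover have "B = 2 * 2^m" by (simp add: B_def)
  ultimately have Bm: "2/\<epsilon> < B" using m by linarith
  have Bpos: "B > 0" by (simp add: B_def)
  define N where "N = nat \<lceil>4*B/\<epsilon>\<rceil> + 1"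
  show "\<exists>N. \<forall>n\<ge>N. \<forall>j. \<bar>real (card {k. k < n \<and> a_tm (j + k) < t}) / real n - t\<bar> < \<epsilon>"
  proof (intro exI[of _ N] allI impI)
    fix n j assume n: "N \<le> n"
    have nb: "4*B/\<epsilon> < real n"
    proof -
      have "4*B/\<epsilon> \<le> real (nat \<lceil>4*B/\<epsilon>\<rceil>)" by (rule real_nat_ceiling_ge)
      thus ?thesis using n unfolding N_def by linarith
    qed
    have npos: "real n > 0" using nb Bpos ep by (smt (verit) divide_pos_pos)
    have g: "\<bar>real (cnt j n t) - n * t\<bar> \<le> 2 * B + n / B"
      using cnt_general[of t j n m] t unfolding B_def by simp
    have "\<bar>real (cnt j n t) / n - t\<bar> = \<bar>real (cnt j n t) - n * t\<bar> / n"
      using npos by (simp add: field_simps)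
    also have "\<dots> \<le> (2 * B + n / B) / n" using g npos by (simp add: divide_right_mono)
    also have "\<dots> = 2 * B / n + 1 / B" using npos Bpos by (simp add: field_simps)
    also have "\<dots> < \<epsilon>/2 + \<epsilon>/2"
    proof (rule add_strict_mono)
      show "2 * B / n < \<epsilon>/2" using nb npos ep by (simp add: field_simps)
      show "1 / B < \<epsilon>/2" using Bm Bpos ep by (simp add: field_simps)
    qed
    finally show "\<bar>real (card {k. k < n \<and> a_tm (j + k) < t}) / real n - t\<bar> < \<epsilon>"
      by (simp add: cnt_def)
  qed
qed

theorem mainTheorem4:
  shows "canonical a_tm \<and> a_tm \<in> alpha_perm u_tm \<and> ergodic (alpha_perm u_tm)"
  using a_canonical a_in_alpha unfolding ergodic_def by blast

end
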